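(* Consider a finite reward-free MDP with occupancy polytope $\Phi$ and a dataset $\mathcal D=\{(d_e^k,\epsilon^k)\}_{k=1}^K$ with $d_e^k\in\Phi$, $\epsilon^k\ge0$. Let $\mathcal P\subseteq[K]\times[K]$ and margins $\epsilon_{ij}\ge0$ for $(i,j)\in\mathcal P$, and let \[\mathcal R_{\mathcal P}:=\{r\in\mathcal R(\mathcal D): r^\top(d_e^i-d_e^j)\ge\epsilon_{ij}\ \forall(i,j)\in\mathcal P\}.\] Let $\mathcal G$ be the directed graph with vertex set $[K]$ and edge set $\mathcal P$. For any simple directed path $p=(i_0\to i_1\to\cdots\to i_m)$ in $\mathcal G$, with $\epsilon(p):=\sum_{\ell=1}^m\epsilon_{i_{\ell-1}i_\ell}$, if $\mathcal R_{\mathcal P}\ne\emptyset$ then $\mathrm{rng}(\mathcal R_{\mathcal P})\ge\epsilon(p)$.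
   Context: The MDP has finite $S$, $A$, transitions $P$, initial distribution $\mu_0$, discount $\gamma\in(0,1)$; $(Md)(s)=\sum_a d(s,a)-\gamma\sum_{s',a'}P(s\mid s',a')d(s',a')$ and $\Phi=\{d\ge0:Md=(1-\gamma)\mu_0\}$. Rewards are $r\in\Delta(S\times A)$. $\mathrm{subopt}(r,d):=\max_{\tilde d\in\Phi}r^\top\tilde d-r^\top d$; $\mathcal R(\mathcal D):=\{r\in\Delta(S\times A):\mathrm{subopt}(r,d_e^k)\le\epsilon^k\ \forall k\}$. For a set of rewards $\mathcal R$, $\mathrm{rng}(\mathcal R):=\min_{r\in\mathcal R}\big(\max_{\tilde d\in\Phi}r^\top\tilde d-\min_{d\in\Phi}r^\top d\big)$. *)

theory Defs
  imports "HOL-Analysis.Analysis"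
begin

text \<open>MDP with finite state type 's and action type 'a. The transition kernel is
  Ptr s a s' = P(s' | s, a). Occupancy measures / rewards are functions on 's \<times> 'a.\<close>

definition stochastic_kernel :: "('s::finite \<Rightarrow> 'a::finite \<Rightarrow> 's \<Rightarrow> real) \<Rightarrow> bool" where
  "stochastic_kernel Ptr \<longleftrightarrow> (\<forall>s a s'. Ptr s a s' \<ge> 0) \<and> (\<forall>s a. (\<Sum>s'\<in>UNIV. Ptr s a s') = 1)"

definition is_distribution :: "('x::finite \<Rightarrow> real) \<Rightarrow> bool" where
  "is_distribution f \<longleftrightarrow> (\<forall>x. f x \<ge> 0) \<and> (\<Sum>x\<in>UNIV. f x) = 1"

definition flowM :: "('s::finite \<Rightarrow> 'a::finite \<Rightarrow> 's \<Rightarrow> real) \<Rightarrow> real \<Rightarrow> ('s \<times> 'a \<Rightarrow> real) \<Rightarrow> 's \<Rightarrow> real" where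
  "flowM Ptr \<gamma> d s = (\<Sum>a\<in>UNIV. d (s, a)) - \<gamma> * (\<Sum>s'\<in>UNIV. \<Sum>a'\<in>UNIV. Ptr s' a' s * d (s', a'))"

definition Phi :: "('s::finite \<Rightarrow> 'a::finite \<Rightarrow> 's \<Rightarrow> real) \<Rightarrow> real \<Rightarrow> ('s \<Rightarrow> real) \<Rightarrow> ('s \<times> 'a \<Rightarrow> real) set" where
  "Phi Ptr \<gamma> \<mu>0 = {d. (\<forall>x. d x \<ge> 0) \<and> (\<forall>s. flowM Ptr \<gamma> d s = (1 - \<gamma>) * \<mu>0 s)}"

definition reward_simplex :: "('x::finite \<Rightarrow> real) set" where
  "reward_simplex = {r. (\<forall>x. r x \<ge> 0) \<and> (\<Sum>x\<in>UNIV. r x) = 1}"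

definition dotp :: "('x::finite \<Rightarrow> real) \<Rightarrow> ('x \<Rightarrow> real) \<Rightarrow> real" where
  "dotp r d = (\<Sum>x\<in>UNIV. r x * d x)"

definition subopt :: "('s::finite \<Rightarrow> 'a::finite \<Rightarrow> 's \<Rightarrow> real) \<Rightarrow> real \<Rightarrow> ('s \<Rightarrow> real)
    \<Rightarrow> ('s \<times> 'a \<Rightarrow> real) \<Rightarrow> ('s \<times> 'a \<Rightarrow> real) \<Rightarrow> real" where
  "subopt Ptr \<gamma> \<mu>0 r d = (SUP d'\<in>Phi Ptr \<gamma> \<mu>0. dotp r d') - dotp r d"

definition RD :: "('s::finite \<Rightarrow> 'a::finite \<Rightarrow> 's \<Rightarrow> real) \<Rightarrow> real \<Rightarrow> ('s \<Rightarrow> real)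
    \<Rightarrow> nat \<Rightarrow> (nat \<Rightarrow> 's \<times> 'a \<Rightarrow> real) \<Rightarrow> (nat \<Rightarrow> real) \<Rightarrow> ('s \<times> 'a \<Rightarrow> real) set" where
  "RD Ptr \<gamma> \<mu>0 K de eps = {r \<in> reward_simplex. \<forall>k\<in>{1..K}. subopt Ptr \<gamma> \<mu>0 r (de k) \<le> eps k}"

definition rng :: "('s::finite \<Rightarrow> 'a::finite \<Rightarrow> 's \<Rightarrow> real) \<Rightarrow> real \<Rightarrow> ('s \<Rightarrow> real)
    \<Rightarrow> ('s \<times> 'a \<Rightarrow> real) set \<Rightarrow> real" where
  "rng Ptr \<gamma> \<mu>0 R = (INF r\<in>R. (SUP d\<in>Phi Ptr \<gamma> \<mu>0. dotp r d) - (INF d\<in>Phi Ptr \<gamma> \<mu>0. dotp r d))"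

definition RP :: "('s::finite \<Rightarrow> 'a::finite \<Rightarrow> 's \<Rightarrow> real) \<Rightarrow> real \<Rightarrow> ('s \<Rightarrow> real)
    \<Rightarrow> nat \<Rightarrow> (nat \<Rightarrow> 's \<times> 'a \<Rightarrow> real) \<Rightarrow> (nat \<Rightarrow> real) \<Rightarrow> (nat \<times> nat) set
    \<Rightarrow> (nat \<Rightarrow> nat \<Rightarrow> real) \<Rightarrow> ('s \<times> 'a \<Rightarrow> real) set" where
  "RP Ptr \<gamma> \<mu>0 K de eps Pset epsP =
     {r \<in> RD Ptr \<gamma> \<mu>0 K de eps. \<forall>(i,j)\<in>Pset. dotp r (\<lambda>x. de i x - de j x) \<ge> epsP i j}"

definition simple_path :: "nat \<Rightarrow> (nat \<times> nat) set \<Rightarrow> nat list \<Rightarrow> bool" where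
  "simple_path K Pset ps \<longleftrightarrow> ps \<noteq> [] \<and> distinct ps \<and> set ps \<subseteq> {1..K}
     \<and> (\<forall>e\<in>set (zip ps (tl ps)). e \<in> Pset)"

definition path_eps :: "(nat \<Rightarrow> nat \<Rightarrow> real) \<Rightarrow> nat list \<Rightarrow> real" where
  "path_eps epsP ps = sum_list (map (\<lambda>(i,j). epsP i j) (zip ps (tl ps)))"

end

theory Submission
  imports Defs
begin

lemma tele:
  fixes f :: "nat \<Rightarrow> real"
  assumes "\<forall>(i,j)\<in>Pset. f i - f j \<ge> e i j"
  shows "ps \<noteq> [] \<Longrightarrow> (\<forall>p\<in>set (zip ps (tl ps)). p \<in> Pset) \<Longrightarrow> f (hd ps) - f (last ps) \<ge> path_eps e ps"
proof (induction ps)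
  case Nil then show ?case by simp
next
  case (Cons x xs)
  show ?case
  proof (cases xs)
    case Nil then show ?thesis by (simp add: path_eps_def)
  next
    case (Cons y ys)
    have e: "(x,y) \<in> Pset" using Cons.prems Cons by simp
    have ih: "f y - f (last xs) \<ge> path_eps e xs" using Cons.IH Cons.prems Cons by simp
    have "path_eps e (x # xs) = e x y + path_eps e xs" using Cons by (simp add: path_eps_def)
    moreover have "f x - f y \<ge> e x y" using assms e by auto
    ultimately show ?thesis using ih Cons by simp
  qed
qed

lemma phi_sum:
  assumes "stochastic_kernel Ptr" "is_distribution \<mu>0" "\<gamma> < 1" "d \<in> Phi Ptr \<gamma> \<mu>0"
  shows "(\<Sum>x\<in>UNIV. d x) = 1"
proof -
  have fl: "\<And>s. flowM Ptr \<gamma> d s = (1 - \<gamma>) * \<mu>0 s" using assms(4) by (simp add: Phi_def)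
  have "(\<Sum>s\<in>UNIV. flowM Ptr \<gamma> d s) = (1 - \<gamma>)" using fl assms(2)
    by (simp add: is_distribution_def sum_distrib_left[symmetric])
  moreover have sw: "(\<Sum>s\<in>UNIV. \<Sum>s'\<in>UNIV. \<Sum>a'\<in>UNIV. Ptr s' a' s * d (s', a'))
      = (\<Sum>s'\<in>UNIV. \<Sum>a'\<in>UNIV. (\<Sum>s\<in>UNIV. Ptr s' a' s) * d (s', a'))"
  proof -
    have "(\<Sum>s\<in>UNIV. \<Sum>s'\<in>UNIV. \<Sum>a'\<in>UNIV. Ptr s' a' s * d (s', a'))
        = (\<Sum>s'\<in>UNIV. \<Sum>s\<in>UNIV. \<Sum>a'\<in>UNIV. Ptr s' a' s * d (s', a'))"
      by (rule sum.swap)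
    also have "\<dots> = (\<Sum>s'\<in>UNIV. \<Sum>a'\<in>UNIV. \<Sum>s\<in>UNIV. Ptr s' a' s * d (s', a'))"
      by (intro sum.cong refl sum.swap)
    also have "\<dots> = (\<Sum>s'\<in>UNIV. \<Sum>a'\<in>UNIV. (\<Sum>s\<in>UNIV. Ptr s' a' s) * d (s', a'))"
      by (simp only: sum_distrib_right)
    finally show ?thesis .
  qed
  moreover have "(\<Sum>s\<in>UNIV. flowM Ptr \<gamma> d s) =
     (\<Sum>s\<in>UNIV. \<Sum>a\<in>UNIV. d (s, a)) - \<gamma> * (\<Sum>s'\<in>UNIV. \<Sum>a'\<in>UNIV. (\<Sum>s\<in>UNIV. Ptr s' a' s) * d (s', a'))"
    unfolding flowM_def sum_subtractf sum_distrib_left[symmetric] sw by (rule refl)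
  moreover have "(\<Sum>s\<in>UNIV. \<Sum>a\<in>UNIV. d (s, a)) = (\<Sum>x\<in>UNIV. d x)"
    by (simp add: sum.cartesian_product UNIV_Times_UNIV[symmetric] del: UNIV_Times_UNIV)
  moreover have "(\<Sum>s'\<in>UNIV. \<Sum>a'\<in>UNIV. (\<Sum>s\<in>UNIV. Ptr s' a' s) * d (s', a')) = (\<Sum>x\<in>UNIV. d x)"
    using assms(1) by (simp add: stochastic_kernel_def sum.cartesian_product UNIV_Times_UNIV[symmetric] del: UNIV_Times_UNIV)
  ultimately have "(1 - \<gamma>) * (\<Sum>x\<in>UNIV. d x) = (1 - \<gamma>)" by (simp add: algebra_simps)
  then show ?thesis using assms(3) by simp
qed

theorem mainTheorem11:
  fixes Ptr :: "'s::finite \<Rightarrow> 'a::finite \<Rightarrow> 's \<Rightarrow> real"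
    and \<mu>0 :: "'s \<Rightarrow> real" and \<gamma> :: real
    and K :: nat and de :: "nat \<Rightarrow> 's \<times> 'a \<Rightarrow> real" and eps :: "nat \<Rightarrow> real"
    and Pset :: "(nat \<times> nat) set" and epsP :: "nat \<Rightarrow> nat \<Rightarrow> real"
    and ps :: "nat list"
  assumes "stochastic_kernel Ptr" and "is_distribution \<mu>0"
    and "0 < \<gamma>" and "\<gamma> < 1"
    and "\<forall>k\<in>{1..K}. de k \<in> Phi Ptr \<gamma> \<mu>0"
    and "\<forall>k\<in>{1..K}. eps k \<ge> 0"
    and "Pset \<subseteq> {1..K} \<times> {1..K}"
    and "\<forall>(i,j)\<in>Pset. epsP i j \<ge> 0"
    and "simple_path K Pset ps"
    and "RP Ptr \<gamma> \<mu>0 K de eps Pset epsP \<noteq> {}"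
  shows "rng Ptr \<gamma> \<mu>0 (RP Ptr \<gamma> \<mu>0 K de eps Pset epsP) \<ge> path_eps epsP ps"
  unfolding rng_def
proof (rule cINF_greatest[OF assms(10)])
  fix r assume r: "r \<in> RP Ptr \<gamma> \<mu>0 K de eps Pset epsP"
  have rs: "\<forall>x. r x \<ge> 0" "(\<Sum>x\<in>UNIV. r x) = 1" using r by (auto simp: RP_def RD_def reward_simplex_def)
  have cons: "\<forall>(i,j)\<in>Pset. dotp r (de i) - dotp r (de j) \<ge> epsP i j"
    using r by (auto simp: RP_def dotp_def right_diff_distrib sum_subtractf)
  have ps: "ps \<noteq> []" "\<forall>p\<in>set (zip ps (tl ps)). p \<in> Pset" "set ps \<subseteq> {1..K}"
    using assms(9) by (auto simp: simple_path_def)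
  have t: "dotp r (de (hd ps)) - dotp r (de (last ps)) \<ge> path_eps epsP ps"
    using tele[OF cons] ps by blast
  have hin: "de (hd ps) \<in> Phi Ptr \<gamma> \<mu>0" "de (last ps) \<in> Phi Ptr \<gamma> \<mu>0"
    using ps assms(5) hd_in_set[OF ps(1)] last_in_set[OF ps(1)] by (meson subsetD)+
  have ub: "dotp r d \<le> 1" if "d \<in> Phi Ptr \<gamma> \<mu>0" for d
  proof -
    have d0: "\<forall>x. d x \<ge> 0" using that by (simp add: Phi_def)
    have "r x \<le> 1" for x
    proof -
      have "r x \<le> (\<Sum>x\<in>UNIV. r x)" using rs(1) by (intro member_le_sum) auto
      then show ?thesis using rs(2) by simp
    qed
    then have "dotp r d \<le> (\<Sum>x\<in>UNIV. 1 * d x)" unfolding dotp_def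
      by (intro sum_mono mult_right_mono) (auto simp: d0)
    then show ?thesis using phi_sum[OF assms(1,2,4) that] by simp
  qed
  have lb: "dotp r d \<ge> 0" if "d \<in> Phi Ptr \<gamma> \<mu>0" for d
    using that rs(1) by (auto simp: Phi_def dotp_def intro!: sum_nonneg)
  have "dotp r (de (hd ps)) \<le> (SUP d\<in>Phi Ptr \<gamma> \<mu>0. dotp r d)"
    by (rule cSUP_upper[OF hin(1)]) (auto intro!: bdd_aboveI2 ub)
  moreover have "dotp r (de (last ps)) \<ge> (INF d\<in>Phi Ptr \<gamma> \<mu>0. dotp r d)"
    by (rule cINF_lower[OF _ hin(2)]) (auto intro!: bdd_belowI2 lb)
  ultimately show "path_eps epsP ps \<le> (SUP d\<in>Phi Ptr \<gamma> \<mu>0. dotp r d) - (INF d\<in>Phi Ptr \<gamma> \<mu>0. dotp r d)"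
    using t by linarith
qed

end
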